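(* View a section $P\in\Gamma(D^*\otimes D^* )$ as the $\mathcal A$-valued 1-form $X\mapsto P(X_D,\cdot)\in D^*$ and let $\Box=\partial\partial^*+\partial^*\partial$. Then on symmetric bilinear forms on $D$: if $P$ is symmetric, trace-free and $\sum_{s=1}^3P(I_s\cdot,I_s\cdot)=-P$, then $\Box P=4(n+2)P$; if $P$ is symmetric, trace-free and $\sum_{s=1}^3P(I_s\cdot,I_s\cdot)=3P$, then $\Box P=4(n+4)P$; and $\Box g=8(n+2)g$.
   Context: Setup. $M$ has dimension $4n+3$ with qc structure $(D,Q,[g])$: $D\subset TM$ of rank $4n$, $Q$ locally spanned by almost complex structures $I_1,I_2,I_3$ on $D$ with $I_1I_2=-I_2I_1=I_3$, $g$ a fixed metric in the conformal class on $D$, locally $D=\ker\eta^1\cap\ker\eta^2\cap\ker\eta^3$ with $d\eta^a(u,v)=2g(I_au,v)$ on $D$, and Reeb fields $\xi_a$ with $\eta^b(\xi_a)=\delta^b_a$, $(\xi_a\lrcorner d\eta^b)|_D=-(\xi_b\lrcorner d\eta^a)|_D$; $V=\mathrm{span}(\xi_a)$, $TM=V\oplus D$; $\eta^1,\eta^2,\eta^3$ also denote the dual basis of $V^*$. $(r,s,t)$ is a cyclic permutation of $(1,2,3)$; $I_0=\mathrm{Id}_D$. $\mathfrak{sp}(D,g)$ = $g$-skew endomorphisms commuting with all $I_s$; $\mathrm{End}_0(D)=\{q_0\mathrm{Id}+\sum_sq_sI_s+A_0:A_0\in\mathfrak{sp}(D,g)\}$. Algebraic bracket. Let $\mathcal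 A=V\oplus D\oplus\mathrm{End}_0(D)\oplus D^*\oplus V^*$, graded in degrees $-2,-1,0,1,2$. The bracket $\{\cdot,\cdot\}$ on $\mathcal A$ is fiberwise, bilinear, skew-symmetric, additive in degrees, zero whenever the total degree lies outside $[-2,2]$, and given for $u,v\in D$, $\varphi,\psi\in D^*$, $\Phi=\sum_{s=0}^3q_sI_s+\Phi_0$ ($\Phi_0\in\mathfrak{sp}(D,g)$), $\Psi\in\mathrm{End}_0(D)$, $\xi=\sum a_s\xi_s\in V$, $\eta=\sum b_s\eta^s\in V^*$, by: $\{u,v\}=-2\sum_sg(I_su,v)\xi_s$; $\{\Phi,u\}=\Phi(u)$; $\{\Phi,\Psi\}=\Phi\Psi-\Psi\Phi$; $\{\Phi,\xi\}=2q_0\xi+2\sum_{(r,s,t)}(q_ra_s-q_sa_r)\xi_t$; $\{\Phi,\varphi\}=-\varphi\circ\Phi$; $\{\Phi_0,\eta\}=0$, $\{I_0,\eta\}=-2\eta$, $\{I_r,\eta^s\}=-\{I_s,\eta^r\}=2\eta^t$, $\{I_r,\eta^r\}=0$; $\{u,\varphi\}=\varphi(u)I_0-\sum_{s=1}^3\varphi(I_su)I_s+u\wedge_{I_0}\varphi-\sum_{s=1}^3u\wedge_{I_s}\varphi$ with $(u\wedge_{I_s}\varphi)(v)=\varphi(I_sv)I_su-g(u,I_sv)I_s\varphi^\sharp$; $\{\xi,\eta\}=2\sum_sa_sb_sI_0-2\sum_{(r,s,t)}(a_rb_s-a_sb_r)I_t$; $\{\xi,\varphi\}=\sum_sa_sI_s(\varphi^\sharp)$;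 $\{\varphi,\psi\}=-\sum_s\varphi(I_s\psi^\sharp)\eta^s$; $\{v,\eta\}=2\sum_sb_sg(I_sv,\cdot)$. (Sums over $(r,s,t)$ are over cyclic permutations; $\varphi^\sharp$ is the $g$-dual vector.) Differential and codifferential. Let $(\epsilon_i)=(\xi_1,\xi_2,\xi_3,e_1,\dots,e_{4n})$ with $(e_a)$ a $g$-orthonormal frame of $D$, and $(\epsilon^i)=(\eta^1,\eta^2,\eta^3,e^1,\dots,e^{4n})$ its dual frame (identifying $TM\cong V\oplus D$ and $T^*M\cong V^*\oplus D^*$). For a section $s$ of $\mathcal A$: $(\partial s)(X)=\{X,s\}$. For an $\mathcal A$-valued 1-form $\phi$: $\partial^*\phi=\sum_i\{\epsilon^i,\phi(\epsilon_i)\}$ and $(\partial\phi)(X,Y)=\{X,\phi(Y)\}-\{Y,\phi(X)\}-\phi(\{X,Y\}_-)$. For an $\mathcal A$-valued 2-form $K$: $(\partial^*K)(X)=\sum_i\{\epsilon^i,K(\epsilon_i,X)\}+\frac12\sum_iK(\{\epsilon^i,X\}_-,\epsilon_i)$. Here $(\cdot)_-$ denotes the $V\oplus D$ component, and $X,Y\in TM\cong V\oplus D$. *)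

theory Defs
  imports "HOL-Analysis.Analysis"
begin

text \<open>The fibre of D is a Euclidean space 'd with inner product g,
  V and V* are real^qi (coefficients w.r.t. xi_1,xi_2,xi_3 resp. eta^1,eta^2,eta^3),
  End(D) is 'd \<Rightarrow>L 'd and D* is 'd \<Rightarrow>L real.\<close>

datatype qi = Q1 | Q2 | Q3

instance qi :: finite
proof
  have "(UNIV :: qi set) = {Q1, Q2, Q3}" by (auto intro: qi.exhaust)
  then show "finite (UNIV :: qi set)" by (metis finite.emptyI finite_insert)
qed

text \<open>cyclic successor: (r, nx r, nx (nx r)) runs over the cyclic permutations of (1,2,3)\<close>
fun nx :: "qi \<Rightarrow> qi" where
  "nx Q1 = Q2" | "nx Q2 = Q3" | "nx Q3 = Q1"

type_synonym 'd alg = "(real^qi) \<times> 'd \<times> ('d \<Rightarrow>\<^sub>L 'd) \<times> ('d \<Rightarrow>\<^sub>L real) \<times> (real^qi)"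
type_synonym 'd tm = "(real^qi) \<times> 'd"

definition aV :: "'d alg \<Rightarrow> real^qi" where "aV x = fst x"
definition aD :: "'d alg \<Rightarrow> 'd" where "aD x = fst (snd x)"
definition aE :: "'d alg \<Rightarrow> ('d \<Rightarrow>\<^sub>L 'd)" where "aE x = fst (snd (snd x))"
definition aDs :: "'d alg \<Rightarrow> ('d \<Rightarrow>\<^sub>L real)" where "aDs x = fst (snd (snd (snd x)))"
definition aVs :: "'d alg \<Rightarrow> real^qi" where "aVs x = snd (snd (snd (snd x)))"

definition sharp :: "('d::euclidean_space \<Rightarrow>\<^sub>L real) \<Rightarrow> 'd" where
  "sharp \<phi> = (\<Sum>b\<in>Basis. blinfun_apply \<phi> b *\<^sub>R b)"

definition spD :: "(qi \<Rightarrow> ('d::euclidean_space \<Rightarrow>\<^sub>L 'd)) \<Rightarrow> ('d \<Rightarrow>\<^sub>L 'd) set" where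
  "spD I = {A. (\<forall>u v. blinfun_apply A u \<bullet> v = - (u \<bullet> blinfun_apply A v))
               \<and> (\<forall>s. A o\<^sub>L I s = I s o\<^sub>L A)}"

definition qdec :: "(qi \<Rightarrow> ('d::euclidean_space \<Rightarrow>\<^sub>L 'd)) \<Rightarrow> ('d \<Rightarrow>\<^sub>L 'd)
    \<Rightarrow> real \<times> (qi \<Rightarrow> real) \<times> ('d \<Rightarrow>\<^sub>L 'd)" where
  "qdec I \<Phi> = (THE (q0, q, \<Phi>0). \<Phi>0 \<in> spD I \<and>
       \<Phi> = q0 *\<^sub>R id_blinfun + (\<Sum>s\<in>UNIV. q s *\<^sub>R I s) + \<Phi>0)"

definition xiv :: "qi \<Rightarrow> real^qi" where "xiv s = axis s 1"

definition brDD :: "(qi \<Rightarrow> ('d::euclidean_space \<Rightarrow>\<^sub>L 'd)) \<Rightarrow> 'd \<Rightarrow> 'd \<Rightarrow> real^qi" where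
  "brDD I u v = (\<Sum>s\<in>UNIV. (-2 * (blinfun_apply (I s) u \<bullet> v)) *\<^sub>R xiv s)"

definition brEV :: "(qi \<Rightarrow> ('d::euclidean_space \<Rightarrow>\<^sub>L 'd)) \<Rightarrow> ('d \<Rightarrow>\<^sub>L 'd) \<Rightarrow> real^qi \<Rightarrow> real^qi" where
  "brEV I \<Phi> a = (case qdec I \<Phi> of (q0, q, _) \<Rightarrow>
      (2 * q0) *\<^sub>R a
      + (\<Sum>r\<in>UNIV. (2 * (q r * a $ nx r - q (nx r) * a $ r)) *\<^sub>R xiv (nx (nx r))))"

definition brEVs :: "(qi \<Rightarrow> ('d::euclidean_space \<Rightarrow>\<^sub>L 'd)) \<Rightarrow> ('d \<Rightarrow>\<^sub>L 'd) \<Rightarrow> real^qi \<Rightarrow> real^qi" where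
  "brEVs I \<Phi> b = (case qdec I \<Phi> of (q0, q, _) \<Rightarrow>
      (-2 * q0) *\<^sub>R b
      + (\<Sum>r\<in>UNIV. (2 * (q r * b $ nx r - q (nx r) * b $ r)) *\<^sub>R xiv (nx (nx r))))"

definition wedgeJ :: "('d::euclidean_space \<Rightarrow>\<^sub>L 'd) \<Rightarrow> 'd \<Rightarrow> ('d \<Rightarrow>\<^sub>L real) \<Rightarrow> ('d \<Rightarrow>\<^sub>L 'd)" where
  "wedgeJ J u \<phi> = Blinfun (\<lambda>v. blinfun_apply \<phi> (blinfun_apply J v) *\<^sub>R blinfun_apply J u
        - (u \<bullet> blinfun_apply J v) *\<^sub>R blinfun_apply J (sharp \<phi>))"

definition brDDs :: "(qi \<Rightarrow> ('d::euclidean_space \<Rightarrow>\<^sub>L 'd)) \<Rightarrow> 'd \<Rightarrow> ('d \<Rightarrow>\<^sub>L real) \<Rightarrow> ('d \<Rightarrow>\<^sub>L 'd)" where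
  "brDDs I u \<phi> = blinfun_apply \<phi> u *\<^sub>R id_blinfun
      - (\<Sum>s\<in>UNIV. blinfun_apply \<phi> (blinfun_apply (I s) u) *\<^sub>R I s)
      + wedgeJ id_blinfun u \<phi> - (\<Sum>s\<in>UNIV. wedgeJ (I s) u \<phi>)"

definition brVVs :: "(qi \<Rightarrow> ('d::euclidean_space \<Rightarrow>\<^sub>L 'd)) \<Rightarrow> real^qi \<Rightarrow> real^qi \<Rightarrow> ('d \<Rightarrow>\<^sub>L 'd)" where
  "brVVs I a b = (2 * (\<Sum>s\<in>UNIV. a $ s * b $ s)) *\<^sub>R id_blinfun
      - (\<Sum>r\<in>UNIV. (2 * (a $ r * b $ nx r - a $ nx r * b $ r)) *\<^sub>R I (nx (nx r)))"

definition brVDs :: "(qi \<Rightarrow> ('d::euclidean_space \<Rightarrow>\<^sub>L 'd)) \<Rightarrow> real^qi \<Rightarrow> ('d \<Rightarrow>\<^sub>L real) \<Rightarrow> 'd" where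
  "brVDs I a \<phi> = (\<Sum>s\<in>UNIV. a $ s *\<^sub>R blinfun_apply (I s) (sharp \<phi>))"

definition brDsDs :: "(qi \<Rightarrow> ('d::euclidean_space \<Rightarrow>\<^sub>L 'd)) \<Rightarrow> ('d \<Rightarrow>\<^sub>L real) \<Rightarrow> ('d \<Rightarrow>\<^sub>L real) \<Rightarrow> real^qi" where
  "brDsDs I \<phi> \<psi> = (\<Sum>s\<in>UNIV. (- blinfun_apply \<phi> (blinfun_apply (I s) (sharp \<psi>))) *\<^sub>R xiv s)"

definition brDVs :: "(qi \<Rightarrow> ('d::euclidean_space \<Rightarrow>\<^sub>L 'd)) \<Rightarrow> 'd \<Rightarrow> real^qi \<Rightarrow> ('d \<Rightarrow>\<^sub>L real)" where
  "brDVs I v b = (\<Sum>s\<in>UNIV. (2 * b $ s) *\<^sub>R Blinfun (\<lambda>w. blinfun_apply (I s) v \<bullet> w))"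

text \<open>The full bracket on A, extended by bilinearity and skew-symmetry.\<close>
definition br :: "(qi \<Rightarrow> ('d::euclidean_space \<Rightarrow>\<^sub>L 'd)) \<Rightarrow> 'd alg \<Rightarrow> 'd alg \<Rightarrow> 'd alg" where
  "br I x y =
    ( brEV I (aE x) (aV y) - brEV I (aE y) (aV x) + brDD I (aD x) (aD y),
      brVDs I (aV x) (aDs y) - brVDs I (aV y) (aDs x)
        + blinfun_apply (aE x) (aD y) - blinfun_apply (aE y) (aD x),
      brVVs I (aV x) (aVs y) - brVVs I (aV y) (aVs x)
        + brDDs I (aD x) (aDs y) - brDDs I (aD y) (aDs x)
        + ((aE x o\<^sub>L aE y) - (aE y o\<^sub>L aE x)),
      brDVs I (aD x) (aVs y) - brDVs I (aD y) (aVs x)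
        + (aDs x o\<^sub>L aE y) - (aDs y o\<^sub>L aE x),
      brEVs I (aE x) (aVs y) - brEVs I (aE y) (aVs x) + brDsDs I (aDs x) (aDs y) )"

definition iota :: "'d tm \<Rightarrow> 'd::euclidean_space alg" where
  "iota X = (fst X, snd X, 0, 0, 0)"
definition projm :: "'d alg \<Rightarrow> 'd tm" where
  "projm x = (aV x, aD x)"

definition frV :: "qi \<Rightarrow> 'd::euclidean_space tm" where "frV s = (xiv s, 0)"
definition frD :: "'d::euclidean_space \<Rightarrow> 'd tm" where "frD b = (0, b)"
definition cofrV :: "qi \<Rightarrow> 'd::euclidean_space alg" where "cofrV s = (0, 0, 0, 0, xiv s)"
definition cofrD :: "'d::euclidean_space \<Rightarrow> 'd alg" where
  "cofrD b = (0, 0, 0, Blinfun (\<lambda>w. b \<bullet> w), 0)"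

definition d0 :: "(qi \<Rightarrow> ('d::euclidean_space \<Rightarrow>\<^sub>L 'd)) \<Rightarrow> 'd alg \<Rightarrow> ('d tm \<Rightarrow> 'd alg)" where
  "d0 I s = (\<lambda>X. br I (iota X) s)"

definition dstar1 :: "(qi \<Rightarrow> ('d::euclidean_space \<Rightarrow>\<^sub>L 'd)) \<Rightarrow> ('d tm \<Rightarrow> 'd alg) \<Rightarrow> 'd alg" where
  "dstar1 I \<phi> = (\<Sum>s\<in>UNIV. br I (cofrV s) (\<phi> (frV s)))
               + (\<Sum>b\<in>Basis. br I (cofrD b) (\<phi> (frD b)))"

definition d1 :: "(qi \<Rightarrow> ('d::euclidean_space \<Rightarrow>\<^sub>L 'd)) \<Rightarrow> ('d tm \<Rightarrow> 'd alg) \<Rightarrow> ('d tm \<Rightarrow> 'd tm \<Rightarrow> 'd alg)" where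
  "d1 I \<phi> = (\<lambda>X Y. br I (iota X) (\<phi> Y) - br I (iota Y) (\<phi> X) - \<phi> (projm (br I (iota X) (iota Y))))"

definition dstar2 :: "(qi \<Rightarrow> ('d::euclidean_space \<Rightarrow>\<^sub>L 'd)) \<Rightarrow> ('d tm \<Rightarrow> 'd tm \<Rightarrow> 'd alg) \<Rightarrow> ('d tm \<Rightarrow> 'd alg)" where
  "dstar2 I K = (\<lambda>X.
      (\<Sum>s\<in>UNIV. br I (cofrV s) (K (frV s) X)) + (\<Sum>b\<in>Basis. br I (cofrD b) (K (frD b) X))
      + (1/2) *\<^sub>R ((\<Sum>s\<in>UNIV. K (projm (br I (cofrV s) (iota X))) (frV s))
                 + (\<Sum>b\<in>Basis. K (projm (br I (cofrD b) (iota X))) (frD b))))"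

definition boxop :: "(qi \<Rightarrow> ('d::euclidean_space \<Rightarrow>\<^sub>L 'd)) \<Rightarrow> ('d tm \<Rightarrow> 'd alg) \<Rightarrow> ('d tm \<Rightarrow> 'd alg)" where
  "boxop I \<phi> = (\<lambda>X. d0 I (dstar1 I \<phi>) X + dstar2 I (d1 I \<phi>) X)"

definition oneform :: "('d::euclidean_space \<Rightarrow> 'd \<Rightarrow> real) \<Rightarrow> ('d tm \<Rightarrow> 'd alg)" where
  "oneform P = (\<lambda>X. (0, 0, 0, Blinfun (\<lambda>w. P (snd X) w), 0))"

end

theory Submission
  imports Defs
begin

declare blinfun.add_left[simp] blinfun.minus_left[simp] blinfun.diff_left[simp] blinfun.scaleR_left[simp] blinfun.sum_left[simp]
declare blinfun.add_right[simp] blinfun.minus_right[simp] blinfun.diff_right[simp] blinfun.scaleR_right[simp] blinfun.sum_right[simp]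

lemma UNIV_qi: "(UNIV::qi set) = {Q1,Q2,Q3}" using qi.exhaust by auto
lemma sum_qi: "sum f (UNIV::qi set) = f Q1 + f Q2 + f Q3" by (simp add: UNIV_qi add.assoc)

definition flat :: "'d::euclidean_space \<Rightarrow> ('d \<Rightarrow>\<^sub>L real)" where
  "flat b = Blinfun (\<lambda>w. b \<bullet> w)"

lemma flat_apply[simp]: "blinfun_apply (flat b) w = b \<bullet> w"
  unfolding flat_def by (simp add: bounded_linear_Blinfun_apply bounded_linear_inner_right)

lemma bil_lin1: "bilinear P \<Longrightarrow> linear (P x)"
  unfolding bilinear_def by (metis (no_types) ext)
lemma bil_lin2: "bilinear P \<Longrightarrow> linear (\<lambda>x. P x y)"
  unfolding bilinear_def by blast

lemma bil_blin[simp]: "bilinear (P::'d::euclidean_space \<Rightarrow> 'd \<Rightarrow> real) \<Longrightarrow> blinfun_apply (Blinfun (\<lambda>w. P x w)) = P x"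
  by (rule bounded_linear_Blinfun_apply) (metis bil_lin1 linear_conv_bounded_linear)

lemma Blinfun_zero[simp]: "Blinfun (\<lambda>_. 0) = 0"
  by (rule blinfun_eqI) (simp add: bounded_linear_Blinfun_apply bounded_linear_zero)

lemma sharp_inner: "sharp \<phi> \<bullet> z = blinfun_apply \<phi> z"
proof -
  have "blinfun_apply \<phi> z = blinfun_apply \<phi> (\<Sum>b\<in>Basis. (z \<bullet> b) *\<^sub>R b)"
    by (simp add: euclidean_representation)
  also have "\<dots> = (\<Sum>b\<in>Basis. (z \<bullet> b) * blinfun_apply \<phi> b)"
    by (simp add: blinfun.sum_right blinfun.scaleR_right)
  finally show ?thesis unfolding sharp_def
    by (simp add: inner_sum_right inner_sum_left mult.commute inner_commute)
qed

lemma inner_sharp: "z \<bullet> sharp \<phi> = blinfun_apply \<phi> z"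
  by (metis inner_commute sharp_inner)

lemma sharp_0[simp]: "sharp 0 = 0" unfolding sharp_def by simp

lemma sum_basis_lin: "linear f \<Longrightarrow> (\<Sum>b\<in>Basis. (b \<bullet> x) *\<^sub>R f b) = f x"
proof -
  assume "linear f"
  then have "f x = f (\<Sum>b\<in>Basis. (x \<bullet> b) *\<^sub>R b)" by (simp add: euclidean_representation)
  also have "\<dots> = (\<Sum>b\<in>Basis. (x \<bullet> b) *\<^sub>R f b)"
    using \<open>linear f\<close> by (simp add: linear_sum linear_scale)
  finally show ?thesis by (simp add: inner_commute)
qed

lemma sum_basis_lin_real: "linear (f::'d::euclidean_space \<Rightarrow> real) \<Longrightarrow> (\<Sum>b\<in>Basis. (b \<bullet> x) * f b) = f x"
  using sum_basis_lin[of f x] by simp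

lemma sum_basis_inner: "(\<Sum>b\<in>Basis. (b \<bullet> x) * (b \<bullet> y)) = x \<bullet> y"
  using sum_basis_lin_real[of "\<lambda>b. b \<bullet> y" x] by (simp add: linear_conv_bounded_linear bounded_linear_inner_left)

lemma sum_Pair: "(\<Sum>x\<in>A. (f x, g x)) = (\<Sum>x\<in>A. f x, \<Sum>x\<in>A. g x)"
  by (simp add: prod_eq_iff fst_sum snd_sum)

lemma brEV_0a[simp]: "brEV I \<Phi> 0 = 0" by (simp add: brEV_def split: prod.split)
lemma brEVs_0a[simp]: "brEVs I \<Phi> 0 = 0" by (simp add: brEVs_def split: prod.split)
lemma brDD_0[simp]: "brDD I 0 v = 0" "brDD I u 0 = 0" by (simp_all add: brDD_def)
lemma brVDs_0[simp]: "brVDs I 0 \<phi> = 0" "brVDs I a 0 = 0" by (simp_all add: brVDs_def)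
lemma wedgeJ_0[simp]: "wedgeJ J 0 \<phi> = 0" "wedgeJ J u 0 = 0" by (simp_all add: wedgeJ_def)
lemma brDDs_0[simp]: "brDDs I 0 \<phi> = 0" "brDDs I u 0 = 0" by (simp_all add: brDDs_def)
lemma brVVs_0[simp]: "brVVs I 0 b = 0" "brVVs I a 0 = 0" by (simp_all add: brVVs_def)
lemma brDVs_0[simp]: "brDVs I 0 b = 0" "brDVs I v 0 = 0" by (simp_all add: brDVs_def)
lemma brDsDs_0[simp]: "brDsDs I 0 \<psi> = 0" "brDsDs I \<phi> 0 = 0" by (simp_all add: brDsDs_def)

locale qs =
  fixes I :: "qi \<Rightarrow> ('d::euclidean_space \<Rightarrow>\<^sub>L 'd)"
  assumes sq: "\<forall>s. I s o\<^sub>L I s = - id_blinfun"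
    and q12: "I Q1 o\<^sub>L I Q2 = I Q3"
    and q21: "I Q2 o\<^sub>L I Q1 = - I Q3"
    and orth: "\<forall>s u v. blinfun_apply (I s) u \<bullet> blinfun_apply (I s) v = u \<bullet> v"
begin

abbreviation J where "J s x \<equiv> blinfun_apply (I s) x"

lemma sqp[simp]: "J s (J s x) = - x"
  using arg_cong[OF sq[rule_format, of s], of "\<lambda>A. blinfun_apply A x"] by simp
lemma p12[simp]: "J Q1 (J Q2 x) = J Q3 x"
  using arg_cong[OF q12, of "\<lambda>A. blinfun_apply A x"] by simp
lemma p21[simp]: "J Q2 (J Q1 x) = - J Q3 x"
  using arg_cong[OF q21, of "\<lambda>A. blinfun_apply A x"] by simp
lemma p13[simp]: "J Q1 (J Q3 x) = - J Q2 x"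
  by (metis p12 sqp)
lemma p31[simp]: "J Q3 (J Q1 x) = J Q2 x"
  by (metis blinfun.minus_right p12 p21 sqp p13 minus_minus)
lemma p23[simp]: "J Q2 (J Q3 x) = J Q1 x"
  by (metis blinfun.minus_right p12 p21 sqp minus_minus)
lemma p32[simp]: "J Q3 (J Q2 x) = - J Q1 x"
  by (metis p12 sqp blinfun.minus_right)
lemma orthp[simp]: "J s u \<bullet> J s v = u \<bullet> v" using orth by blast
lemma skew: "J s u \<bullet> v = - (u \<bullet> J s v)"
  by (metis orthp sqp inner_minus_right minus_minus)
lemma skew0[simp]: "J s u \<bullet> u = 0" "u \<bullet> J s u = 0"
  using skew[of s u u] by (auto simp: inner_commute)

lemma qdec0: "qdec I 0 = (0, \<lambda>_. 0, 0)"
proof -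
  have uniq: "q0 = 0 \<and> q = (\<lambda>_. 0) \<and> \<Phi>0 = 0"
    if sp: "\<Phi>0 \<in> spD I" and eq: "0 = q0 *\<^sub>R id_blinfun + (\<Sum>s\<in>UNIV. q s *\<^sub>R I s) + \<Phi>0" for q0 q \<Phi>0
  proof -
    have skA: "blinfun_apply \<Phi>0 u \<bullet> v = - (u \<bullet> blinfun_apply \<Phi>0 v)" for u v
      using sp unfolding spD_def by blast
    have cm: "blinfun_apply \<Phi>0 (J t u) = J t (blinfun_apply \<Phi>0 u)" for t u
      using sp unfolding spD_def by (metis (mono_tags, lifting) blinfun_apply_blinfun_compose mem_Collect_eq)
    have pt: "blinfun_apply \<Phi>0 x = - (q0 *\<^sub>R x + q Q1 *\<^sub>R J Q1 x + q Q2 *\<^sub>R J Q2 x + q Q3 *\<^sub>R J Q3 x)" for x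
    proof -
      have "0 = blinfun_apply (q0 *\<^sub>R id_blinfun + (\<Sum>s\<in>UNIV. q s *\<^sub>R I s) + \<Phi>0) x"
        by (simp flip: eq)
      then show ?thesis by (simp add: blinfun.add_left blinfun.sum_left sum_qi algebra_simps eq_neg_iff_add_eq_0)
    qed
    obtain e :: 'd where e: "e \<in> Basis" using nonempty_Basis by blast
    have ee: "e \<bullet> e = 1" using e by simp
    have "blinfun_apply \<Phi>0 e \<bullet> e = 0" using skA[of e e] by (simp add: inner_commute)
    then have h0: "q0 = 0" using pt[of e] ee by (simp add: inner_diff_left)
    have c1: "blinfun_apply \<Phi>0 (J Q1 e) = J Q1 (blinfun_apply \<Phi>0 e)" by (rule cm)
    then have c1': "q Q2 *\<^sub>R J Q3 e + q Q2 *\<^sub>R J Q3 e = q Q3 *\<^sub>R J Q2 e + q Q3 *\<^sub>R J Q2 e"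
      using pt h0 by (simp add: blinfun.add_right blinfun.scaleR_right algebra_simps)
    have e2: "J Q2 e \<bullet> J Q3 e = 0" using skew[of Q2 e "J Q3 e"] by simp
    have e3: "J Q3 e \<bullet> J Q2 e = 0" using e2 by (simp add: inner_commute)
    have e4: "J Q1 e \<bullet> J Q3 e = 0" using skew[of Q1 e "J Q3 e"] by simp
    have "q Q2 = 0"
    proof -
      have "(q Q2 *\<^sub>R J Q3 e + q Q2 *\<^sub>R J Q3 e) \<bullet> J Q3 e = 2 * q Q2" using ee by (simp add: inner_add_left)
      moreover have "(q Q3 *\<^sub>R J Q2 e + q Q3 *\<^sub>R J Q2 e) \<bullet> J Q3 e = 0" using e2 by (simp add: inner_add_left)
      ultimately show ?thesis using c1' by simp
    qed
    moreover have "q Q3 = 0"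
    proof -
      have "(q Q2 *\<^sub>R J Q3 e + q Q2 *\<^sub>R J Q3 e) \<bullet> J Q2 e = 0" using e3 by (simp add: inner_add_left)
      moreover have "(q Q3 *\<^sub>R J Q2 e + q Q3 *\<^sub>R J Q2 e) \<bullet> J Q2 e = 2 * q Q3" using ee by (simp add: inner_add_left)
      ultimately show ?thesis using c1' by simp
    qed
    moreover
    have c2: "blinfun_apply \<Phi>0 (J Q2 e) = J Q2 (blinfun_apply \<Phi>0 e)" by (rule cm)
    then have c2': "q Q1 *\<^sub>R J Q3 e + q Q1 *\<^sub>R J Q3 e = q Q3 *\<^sub>R J Q1 e + q Q3 *\<^sub>R J Q1 e"
      using pt h0 by (simp add: algebra_simps)
    have "q Q1 = 0"
    proof -
      have "(q Q1 *\<^sub>R J Q3 e + q Q1 *\<^sub>R J Q3 e) \<bullet> J Q3 e = 2 * q Q1" using ee by (simp add: inner_add_left)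
      moreover have "(q Q3 *\<^sub>R J Q1 e + q Q3 *\<^sub>R J Q1 e) \<bullet> J Q3 e = 0" using e4 by (simp add: inner_add_left)
      ultimately show ?thesis using c2' by simp
    qed
    ultimately have qz: "q = (\<lambda>_. 0)" by (metis (full_types) ext qi.exhaust)
    have "\<Phi>0 = 0" by (rule blinfun_eqI) (simp add: pt h0 qz)
    with h0 qz show ?thesis by simp
  qed
  have ex: "(0::'d \<Rightarrow>\<^sub>L 'd) \<in> spD I" unfolding spD_def by simp
  show ?thesis unfolding qdec_def
    apply (rule the_equality)
    subgoal using ex by simp
    subgoal for x using uniq by (cases x) auto
    done
qed

lemma brEV_0[simp]: "brEV I 0 a = 0" by (simp add: brEV_def qdec0)
lemma brEVs_0[simp]: "brEVs I 0 a = 0" by (simp add: brEVs_def qdec0)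

end

lemmas adefs = aV_def aD_def aE_def aDs_def aVs_def

lemma bil_0l[simp]: "bilinear P \<Longrightarrow> P 0 w = 0"
  using bil_lin2[of P w] linear_0 by blast
lemma bil_0r[simp]: "bilinear P \<Longrightarrow> P w 0 = 0"
  using bil_lin1[of P w] linear_0 by blast

lemma bil_0fun[simp]: "bilinear P \<Longrightarrow> P 0 = (\<lambda>_. 0)"
  by (rule ext) simp

context qs begin

lemma skew': "u \<bullet> J s v = - (J s u \<bullet> v)" by (simp add: skew)

lemma trJ:
  fixes P :: "'d \<Rightarrow> 'd \<Rightarrow> real"
  assumes bl: "bilinear P" and sy: "\<forall>x y. P x y = P y x"
  shows "(\<Sum>b\<in>Basis. P b (J s b)) = 0"
proof -
  have "(\<Sum>b\<in>Basis. P b (J s b)) = (\<Sum>b\<in>Basis. \<Sum>c\<in>Basis. (c \<bullet> J s b) * P b c)"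
    using sum_basis_lin_real[OF bil_lin1[OF bl]] by simp
  also have "\<dots> = (\<Sum>c\<in>Basis. \<Sum>b\<in>Basis. (c \<bullet> J s b) * P b c)" by (rule sum.swap)
  also have "\<dots> = (\<Sum>c\<in>Basis. \<Sum>b\<in>Basis. - ((b \<bullet> J s c) * P c b))"
  proof -
    have sw: "c \<bullet> J s b = - (b \<bullet> J s c)" for b c by (metis skew' inner_commute)
    have pw: "(c \<bullet> J s b) * P b c = - ((b \<bullet> J s c) * P c b)" for b c using sy sw[of c b] by simp
    show ?thesis by (intro sum.cong refl) (rule pw)
  qed
  also have "\<dots> = - (\<Sum>b\<in>Basis. P b (J s b))"
    using sum_basis_lin_real[OF bil_lin1[OF bl]] by (simp add: sum_negf)
  finally show ?thesis by simp
qed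

lemma dstar1_0:
  fixes P :: "'d \<Rightarrow> 'd \<Rightarrow> real"
  assumes bl: "bilinear P" and sy: "\<forall>x y. P x y = P y x"
  shows "dstar1 I (oneform P) = 0"
proof -
  have "dstar1 I (oneform P) = (0,0,0,0, \<Sum>b\<in>Basis. brDsDs I (flat b) (Blinfun (P b)))"
    unfolding dstar1_def using bl
    by (simp add: oneform_def frV_def frD_def cofrV_def cofrD_def br_def adefs flat_def[symmetric] sum_Pair zero_prod_def)
  also have "(\<Sum>b\<in>Basis. brDsDs I (flat b) (Blinfun (P b))) = 0"
  proof -
    have "(\<Sum>b\<in>Basis. brDsDs I (flat b) (Blinfun (P b)))
       = (\<Sum>s\<in>UNIV. (\<Sum>b\<in>Basis. P b (J s b)) *\<^sub>R xiv s)"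
      unfolding brDsDs_def using bl
      apply (simp add: skew'[of _ _ "sharp _"] inner_sharp sharp_inner scaleR_sum_left)
      by (rule sum.swap)
    then show ?thesis using trJ[OF bl sy] by simp
  qed
  finally show ?thesis by (simp add: zero_prod_def)
qed

lemma d0_0[simp]: "d0 I (0,0,0,0,0) X = 0"
  by (simp add: d0_def br_def adefs iota_def zero_prod_def)


lemma K_eq:
  fixes P :: "'d \<Rightarrow> 'd \<Rightarrow> real"
  assumes bl: "bilinear P"
  shows "d1 I (oneform P) X Y = (0, brVDs I (fst X) (Blinfun (P (snd Y))) - brVDs I (fst Y) (Blinfun (P (snd X))),
     brDDs I (snd X) (Blinfun (P (snd Y))) - brDDs I (snd Y) (Blinfun (P (snd X))), 0, 0)"
  using bl by (simp add: d1_def oneform_def br_def adefs iota_def projm_def zero_prod_def)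

lemma brV_K: "br I (cofrV s) (0,w,E,0,0) = (0,0,0,-brDVs I w (xiv s), -brEVs I E (xiv s))"
  by (simp add: br_def adefs cofrV_def)
lemma brD_K: "br I (cofrD b) (0,w,E,0,0) = (0,0,-brDDs I w (flat b), flat b o\<^sub>L E, 0)"
  by (simp add: br_def adefs cofrD_def flat_def[symmetric])
lemma pV: "projm (br I (cofrV s) (iota X)) = (0,0)"
  by (simp add: br_def adefs cofrV_def projm_def iota_def)
lemma pD: "projm (br I (cofrD b) (iota X)) = (0, - brVDs I (fst X) (flat b))"
  by (simp add: br_def adefs cofrD_def projm_def iota_def flat_def[symmetric])

lemma box_eq:
  fixes P :: "'d \<Rightarrow> 'd \<Rightarrow> real"
  assumes bl: "bilinear P" and sy: "\<forall>x y. P x y = P y x"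
  shows "boxop I (oneform P) X = (0, 0,
     (\<Sum>b\<in>Basis. - brDDs I (- brVDs I (fst X) (Blinfun (P b))) (flat b))
     + (1/2) *\<^sub>R (\<Sum>b\<in>Basis. brDDs I (- brVDs I (fst X) (flat b)) (Blinfun (P b))
                         - brDDs I b (Blinfun (P (- brVDs I (fst X) (flat b))))),
     (\<Sum>s\<in>UNIV. - brDVs I (brVDs I (xiv s) (Blinfun (P (snd X)))) (xiv s))
     + (\<Sum>b\<in>Basis. flat b o\<^sub>L (brDDs I b (Blinfun (P (snd X))) - brDDs I (snd X) (Blinfun (P b)))), 0)"
  using bl
  by (simp add: boxop_def dstar1_0[OF bl sy] dstar2_def K_eq frV_def frD_def brV_K brD_K pV pD sum_Pair zero_prod_def)


end

lemma sharp_add[simp]: "sharp (\<phi> + \<psi>) = sharp \<phi> + sharp \<psi>"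
  unfolding sharp_def by (simp add: scaleR_add_left sum.distrib)
lemma sharp_scale[simp]: "sharp (c *\<^sub>R \<phi>) = c *\<^sub>R sharp \<phi>"
  unfolding sharp_def by (simp add: scaleR_sum_right)
lemma sharp_neg[simp]: "sharp (- \<phi>) = - sharp \<phi>"
  using sharp_scale[of "-1" \<phi>] by simp
lemma sharp_diff[simp]: "sharp (\<phi> - \<psi>) = sharp \<phi> - sharp \<psi>"
  using sharp_add[of \<phi> "-\<psi>"] by simp
lemma sharp_sum[simp]: "sharp (sum f A) = (\<Sum>i\<in>A. sharp (f i))"
  by (induction A rule: infinite_finite_induct) auto
lemma sharp_flat[simp]: "sharp (flat b) = b"
proof -
  have "(\<Sum>c\<in>Basis. (c \<bullet> b) *\<^sub>R c) = (\<Sum>c\<in>Basis. (b \<bullet> c) *\<^sub>R c)" by (simp add: inner_commute)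
  then show ?thesis unfolding sharp_def by (simp add: euclidean_representation)
qed

lemma wedgeJ_apply: "blinfun_apply (wedgeJ K u \<phi>) v
   = blinfun_apply \<phi> (blinfun_apply K v) *\<^sub>R blinfun_apply K u - (u \<bullet> blinfun_apply K v) *\<^sub>R blinfun_apply K (sharp \<phi>)"
proof -
  have "linear (\<lambda>v. blinfun_apply \<phi> (blinfun_apply K v) *\<^sub>R blinfun_apply K u - (u \<bullet> blinfun_apply K v) *\<^sub>R blinfun_apply K (sharp \<phi>))"
    by (rule linearI) (simp_all add: algebra_simps inner_add_right)
  then show ?thesis unfolding wedgeJ_def
    by (simp add: bounded_linear_Blinfun_apply linear_conv_bounded_linear)
qed

context qs begin

lemma brDDs_apply: "blinfun_apply (brDDs I x \<phi>) v =
   blinfun_apply \<phi> x *\<^sub>R v - (\<Sum>s\<in>UNIV. blinfun_apply \<phi> (J s x) *\<^sub>R J s v)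
   + (blinfun_apply \<phi> v *\<^sub>R x - (x \<bullet> v) *\<^sub>R sharp \<phi>)
   - (\<Sum>s\<in>UNIV. blinfun_apply \<phi> (J s v) *\<^sub>R J s x - (x \<bullet> J s v) *\<^sub>R J s (sharp \<phi>))"
  unfolding brDDs_def by (simp add: wedgeJ_apply)

lemma inner_brDDs: "b \<bullet> blinfun_apply (brDDs I x \<phi>) v =
   blinfun_apply \<phi> x * (b \<bullet> v) - (\<Sum>s\<in>UNIV. blinfun_apply \<phi> (J s x) * (b \<bullet> J s v))
   + blinfun_apply \<phi> v * (b \<bullet> x) - (x \<bullet> v) * (b \<bullet> sharp \<phi>)
   - (\<Sum>s\<in>UNIV. blinfun_apply \<phi> (J s v) * (b \<bullet> J s x) - (x \<bullet> J s v) * (b \<bullet> J s (sharp \<phi>)))"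
  by (simp add: brDDs_apply inner_diff_right inner_add_right inner_sum_right)

lemma sum_inner_brDDs: "(\<Sum>b\<in>Basis. b \<bullet> blinfun_apply (brDDs I (x b) (\<phi> b)) v) =
   (\<Sum>b\<in>Basis. blinfun_apply (\<phi> b) (x b) * (b \<bullet> v))
   - (\<Sum>s\<in>UNIV. \<Sum>b\<in>Basis. blinfun_apply (\<phi> b) (J s (x b)) * (b \<bullet> J s v))
   + (\<Sum>b\<in>Basis. blinfun_apply (\<phi> b) v * (b \<bullet> x b))
   - (\<Sum>b\<in>Basis. (x b \<bullet> v) * (b \<bullet> sharp (\<phi> b)))
   - (\<Sum>s\<in>UNIV. (\<Sum>b\<in>Basis. blinfun_apply (\<phi> b) (J s v) * (b \<bullet> J s (x b)))
        - (\<Sum>b\<in>Basis. (x b \<bullet> J s v) * (b \<bullet> J s (sharp (\<phi> b)))))"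
  apply (simp add: inner_brDDs sum.distrib sum_subtractf)
  apply (subst (1 2) sum.swap)
  by (simp add: sum_subtractf, rule sum.swap)


lemma card_qi[simp]: "card (UNIV::qi set) = 3" by (simp add: UNIV_qi)

lemma G: "linear (f::'d::euclidean_space \<Rightarrow> real) \<Longrightarrow> (\<Sum>b\<in>Basis. f b * (b \<bullet> x)) = f x"
  using sum_basis_lin_real[of f x] by (simp add: mult.commute)

lemma lin_J: "linear (J s)" using blinfun.bounded_linear_right bounded_linear.linear by blast

lemma sum_A:
  fixes P :: "'d \<Rightarrow> 'd \<Rightarrow> real"
  assumes bl: "bilinear P"
  shows "(\<Sum>b\<in>Basis. b \<bullet> blinfun_apply (brDDs I b (Blinfun (P u))) v) = (real DIM('d) + 6) * P u v"
proof -
  have l1: "linear (P u)" using bil_lin1[OF bl] .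
  have a1: "(\<Sum>b\<in>Basis. P u b * (b \<bullet> v)) = P u v" using G[OF l1] .
  have a2: "(\<Sum>b\<in>Basis. P u (J s b) * (b \<bullet> J s v)) = - P u v" for s
  proof -
    have "linear (\<lambda>b. P u (J s b))" using linear_compose[OF lin_J l1] by (simp add: o_def)
    from G[OF this, of "J s v"] show ?thesis using linear_neg[OF l1] by simp
  qed
  have a3: "(\<Sum>b\<in>(Basis::'d set). P u v * (b \<bullet> b)) = real DIM('d) * P u v"
    by (simp add: sum_distrib_left[symmetric])
  have a4: "(\<Sum>b\<in>Basis. (b \<bullet> v) * (b \<bullet> sharp (Blinfun (P u)))) = P u v"
    using bl by (simp add: inner_sharp sum_basis_lin_real[OF l1])
  have a5: "(\<Sum>b\<in>Basis. P u (J s v) * (b \<bullet> J s b)) = 0" for s by simp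
  have a6: "(\<Sum>b\<in>Basis. (b \<bullet> J s v) * (b \<bullet> J s (sharp (Blinfun (P u))))) = P u v" for s
    using bl by (simp add: sum_basis_inner inner_sharp)
  show ?thesis
    using sum_inner_brDDs[of "\<lambda>b. b" "\<lambda>_. Blinfun (P u)" v]
    apply (simp only: bil_blin[OF bl] a1 a2 a3 a4 a5 a6)
    by (simp add: algebra_simps)
qed

lemma sum_B:
  fixes P :: "'d \<Rightarrow> 'd \<Rightarrow> real"
  assumes bl: "bilinear P" and sy: "\<forall>x y. P x y = P y x"
  shows "(\<Sum>b\<in>Basis. b \<bullet> blinfun_apply (brDDs I u (Blinfun (P b))) v)
     = 2 * P u v - 2 * (\<Sum>s\<in>UNIV. P (J s u) (J s v)) - (u \<bullet> v) * (\<Sum>b\<in>Basis. P b b)"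
proof -
  have l2: "linear (\<lambda>b. P b y)" for y using bil_lin2[OF bl] .
  have b1: "(\<Sum>b\<in>Basis. P b u * (b \<bullet> v)) = P u v" using G[OF l2] sy by metis
  have b2: "(\<Sum>b\<in>Basis. P b (J s u) * (b \<bullet> J s v)) = P (J s u) (J s v)" for s
    using G[OF l2] sy by metis
  have b3: "(\<Sum>b\<in>Basis. P b v * (b \<bullet> u)) = P u v" using G[OF l2] .
  have b4: "(\<Sum>b\<in>Basis. (u \<bullet> v) * (b \<bullet> sharp (Blinfun (P b)))) = (u \<bullet> v) * (\<Sum>b\<in>Basis. P b b)"
    using bl by (simp add: inner_sharp sum_distrib_left)
  have b5: "(\<Sum>b\<in>Basis. P b (J s v) * (b \<bullet> J s u)) = P (J s u) (J s v)" for s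
    using G[OF l2] .
  have b6: "(\<Sum>b\<in>Basis. (u \<bullet> J s v) * (b \<bullet> J s (sharp (Blinfun (P b))))) = 0" for s
  proof -
    have "(\<Sum>b\<in>Basis. (b \<bullet> J s (sharp (Blinfun (P b))))) = - (\<Sum>b\<in>Basis. P b (J s b))"
      using bl by (simp add: skew' inner_sharp sum_negf)
    then show ?thesis using trJ[OF bl sy, of s] by (simp add: sum_distrib_left[symmetric])
  qed
  show ?thesis
    using sum_inner_brDDs[of "\<lambda>_. u" "\<lambda>b. Blinfun (P b)" v]
    apply (simp only: bil_blin[OF bl] b1 b2 b3 b4 b5 b6)
    by (simp add: sum.distrib algebra_simps)
qed


lemma brDVs_apply: "blinfun_apply (brDVs I w b) v = (\<Sum>s\<in>UNIV. (2 * b $ s) * (J s w \<bullet> v))"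
  by (simp add: brDVs_def flat_def[symmetric])

lemma xiv_nth[simp]: "xiv s $ t = (if t = s then 1 else 0)"
  by (simp add: xiv_def axis_def)

lemma term1:
  "blinfun_apply (\<Sum>s\<in>UNIV. - brDVs I (brVDs I (xiv s) \<phi>) (xiv s)) v = 6 * blinfun_apply \<phi> v"
  by (simp add: brDVs_apply brVDs_def sum_qi inner_sharp sharp_inner skew' inner_add_left)

lemma Ds_tot:
  fixes P :: "'d \<Rightarrow> 'd \<Rightarrow> real"
  assumes bl: "bilinear P" and sy: "\<forall>x y. P x y = P y x"
  shows "blinfun_apply ((\<Sum>s\<in>UNIV. - brDVs I (brVDs I (xiv s) (Blinfun (P u))) (xiv s))
     + (\<Sum>b\<in>Basis. flat b o\<^sub>L (brDDs I b (Blinfun (P u)) - brDDs I u (Blinfun (P b))))) v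
   = (real DIM('d) + 10) * P u v + 2 * (\<Sum>s\<in>UNIV. P (J s u) (J s v)) + (u \<bullet> v) * (\<Sum>b\<in>Basis. P b b)"
proof -
  have "blinfun_apply (\<Sum>b\<in>Basis. flat b o\<^sub>L (brDDs I b (Blinfun (P u)) - brDDs I u (Blinfun (P b)))) v
     = (\<Sum>b\<in>Basis. b \<bullet> blinfun_apply (brDDs I b (Blinfun (P u))) v) - (\<Sum>b\<in>Basis. b \<bullet> blinfun_apply (brDDs I u (Blinfun (P b))) v)"
    by (simp add: inner_diff_right sum_subtractf)
  then show ?thesis using term1[of "Blinfun (P u)" v]
    by (simp add: sum_A[OF bl] sum_B[OF bl sy] bl algebra_simps)
qed


lemma lin_l: "linear (\<lambda>x. brDDs I x \<phi>)"
  by (rule linearI; rule blinfun_eqI)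
     (simp_all add: brDDs_apply algebra_simps sum.distrib inner_add_left sum_subtractf scaleR_sum_right)

lemma lin_r: "linear (\<lambda>\<phi>. brDDs I x \<phi>)"
  by (rule linearI; rule blinfun_eqI)
     (simp_all add: brDDs_apply algebra_simps sum.distrib sum_subtractf scaleR_sum_right)

lemma brDDs_l:
  "brDDs I (x + y) \<phi> = brDDs I x \<phi> + brDDs I y \<phi>"
  "brDDs I (- x) \<phi> = - brDDs I x \<phi>"
  "brDDs I (c *\<^sub>R x) \<phi> = c *\<^sub>R brDDs I x \<phi>"
  "brDDs I (sum f A) \<phi> = (\<Sum>i\<in>A. brDDs I (f i) \<phi>)"
  using linear_add[OF lin_l] linear_neg[OF lin_l] linear_scale[OF lin_l] linear_sum[OF lin_l] by auto

lemma brDDs_r: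
  "brDDs I x (\<phi> + \<psi>) = brDDs I x \<phi> + brDDs I x \<psi>"
  "brDDs I x (- \<phi>) = - brDDs I x \<phi>"
  "brDDs I x (c *\<^sub>R \<phi>) = c *\<^sub>R brDDs I x \<phi>"
  "brDDs I x (sum f A) = (\<Sum>i\<in>A. brDDs I x (f i))"
  using linear_add[OF lin_r] linear_neg[OF lin_r] linear_scale[OF lin_r] linear_sum[OF lin_r] by auto

end

lemma Pc_flat:
  fixes P :: "'d::euclidean_space \<Rightarrow> 'd \<Rightarrow> real"
  assumes bl: "bilinear P"
  shows "Blinfun (P b) = (\<Sum>c\<in>Basis. P b c *\<^sub>R flat c)"
  by (rule blinfun_eqI) (simp add: bl sum_basis_lin_real[OF bil_lin1[OF bl]] mult.commute)

lemma Pc_lin: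
  fixes P :: "'d::euclidean_space \<Rightarrow> 'd \<Rightarrow> real"
  assumes bl: "bilinear P"
  shows "linear (\<lambda>x. Blinfun (P x))"
proof -
  have la: "P (x + y) w = P x w + P y w" "P (c *\<^sub>R x) w = c * P x w" for x y c w
    using linear_add[OF bil_lin2[OF bl, of w]] linear_scale[OF bil_lin2[OF bl, of w]] by auto
  show ?thesis by (rule linearI; rule blinfun_eqI) (simp_all add: bl la)
qed

context qs begin

lemma X12:
  fixes P :: "'d \<Rightarrow> 'd \<Rightarrow> real"
  assumes bl: "bilinear P" and sy: "\<forall>x y. P x y = P y x"
  shows "(\<Sum>b\<in>Basis. brDDs I (J t b) (Blinfun (P b))) = (\<Sum>b\<in>Basis. brDDs I (J t (sharp (Blinfun (P b)))) (flat b))"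
proof -
  have "(\<Sum>b\<in>Basis. brDDs I (J t b) (Blinfun (P b))) = (\<Sum>b\<in>Basis. \<Sum>c\<in>Basis. P b c *\<^sub>R brDDs I (J t b) (flat c))"
    by (simp add: Pc_flat[OF bl] brDDs_r)
  also have "\<dots> = (\<Sum>c\<in>Basis. \<Sum>b\<in>Basis. P b c *\<^sub>R brDDs I (J t b) (flat c))" by (rule sum.swap)
  also have "\<dots> = (\<Sum>c\<in>Basis. brDDs I (J t (\<Sum>b\<in>Basis. P c b *\<^sub>R b)) (flat c))"
    using sy by (simp add: brDDs_l)
  also have "\<dots> = (\<Sum>b\<in>Basis. brDDs I (J t (sharp (Blinfun (P b)))) (flat b))"
    using bl by (simp add: sharp_def)
  finally show ?thesis .
qed

lemma X3:
  fixes P :: "'d \<Rightarrow> 'd \<Rightarrow> real"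
  assumes bl: "bilinear P"
  shows "(\<Sum>b\<in>Basis. brDDs I b (Blinfun (P (J t b)))) = - (\<Sum>b\<in>Basis. brDDs I (J t b) (Blinfun (P b)))"
proof -
  have pe: "Blinfun (P x) = (\<Sum>d\<in>Basis. (x \<bullet> d) *\<^sub>R Blinfun (P d))" for x
  proof -
    have "Blinfun (P x) = Blinfun (P (\<Sum>d\<in>Basis. (x \<bullet> d) *\<^sub>R d))" by (simp add: euclidean_representation)
    also have "\<dots> = (\<Sum>d\<in>Basis. (x \<bullet> d) *\<^sub>R Blinfun (P d))"
    proof -
      have "Blinfun (P (\<Sum>d\<in>Basis. (x \<bullet> d) *\<^sub>R d)) = (\<Sum>d\<in>Basis. Blinfun (P ((x \<bullet> d) *\<^sub>R d)))"
        using linear_sum[OF Pc_lin[OF bl], of "\<lambda>d. (x \<bullet> d) *\<^sub>R d" Basis] by (simp only: o_def)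
      also have "\<dots> = (\<Sum>d\<in>Basis. (x \<bullet> d) *\<^sub>R Blinfun (P d))"
        using linear_scale[OF Pc_lin[OF bl]] by (simp only:)
      finally show ?thesis .
    qed
    finally show ?thesis .
  qed
  have "(\<Sum>b\<in>Basis. brDDs I b (Blinfun (P (J t b)))) = (\<Sum>b\<in>Basis. \<Sum>d\<in>Basis. (J t b \<bullet> d) *\<^sub>R brDDs I b (Blinfun (P d)))"
    by (subst pe) (simp add: brDDs_r)
  also have "\<dots> = (\<Sum>d\<in>Basis. \<Sum>b\<in>Basis. (J t b \<bullet> d) *\<^sub>R brDDs I b (Blinfun (P d)))" by (rule sum.swap)
  also have "\<dots> = (\<Sum>d\<in>Basis. brDDs I (\<Sum>b\<in>Basis. (J t b \<bullet> d) *\<^sub>R b) (Blinfun (P d)))"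
    by (simp add: brDDs_l)
  also have "\<dots> = (\<Sum>d\<in>Basis. brDDs I (- J t d) (Blinfun (P d)))"
  proof -
    have "(\<Sum>b\<in>Basis. (J t b \<bullet> d) *\<^sub>R b) = - J t d" for d
    proof -
      have "(\<Sum>b\<in>Basis. (J t b \<bullet> d) *\<^sub>R b) = - (\<Sum>b\<in>Basis. (J t d \<bullet> b) *\<^sub>R b)"
      proof -
        have pw: "(J t b \<bullet> d) *\<^sub>R b = - ((J t d \<bullet> b) *\<^sub>R b)" for b
          by (metis skew inner_commute scaleR_minus_left)
        show ?thesis by (simp only: pw sum_negf)
      qed
      then show ?thesis by (simp add: euclidean_representation)
    qed
    then show ?thesis by simp
  qed
  also have "\<dots> = - (\<Sum>b\<in>Basis. brDDs I (J t b) (Blinfun (P b)))" by (simp add: brDDs_l sum_negf)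
  finally show ?thesis .
qed


lemma E_tot:
  fixes P :: "'d \<Rightarrow> 'd \<Rightarrow> real"
  assumes bl: "bilinear P" and sy: "\<forall>x y. P x y = P y x"
  shows "(\<Sum>b\<in>Basis. - brDDs I (- brVDs I a (Blinfun (P b))) (flat b))
     + (1/2) *\<^sub>R (\<Sum>b\<in>Basis. brDDs I (- brVDs I a (flat b)) (Blinfun (P b))
                         - brDDs I b (Blinfun (P (- brVDs I a (flat b))))) = 0"
proof -
  define X2 where "X2 t = (\<Sum>b\<in>Basis. brDDs I (J t b) (Blinfun (P b)))" for t
  have e1: "(\<Sum>b\<in>Basis. - brDDs I (- brVDs I a (Blinfun (P b))) (flat b)) = (\<Sum>t\<in>UNIV. a $ t *\<^sub>R X2 t)"
  proof -
    have "(\<Sum>b\<in>Basis. - brDDs I (- brVDs I a (Blinfun (P b))) (flat b))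
       = (\<Sum>b\<in>Basis. \<Sum>t\<in>UNIV. a $ t *\<^sub>R brDDs I (J t (sharp (Blinfun (P b)))) (flat b))"
      by (simp add: brVDs_def brDDs_l)
    also have "\<dots> = (\<Sum>t\<in>UNIV. \<Sum>b\<in>Basis. a $ t *\<^sub>R brDDs I (J t (sharp (Blinfun (P b)))) (flat b))"
      by (rule sum.swap)
    also have "\<dots> = (\<Sum>t\<in>UNIV. a $ t *\<^sub>R X2 t)"
      by (simp add: X2_def X12[OF bl sy] scaleR_sum_right)
    finally show ?thesis .
  qed
  have e2: "(\<Sum>b\<in>Basis. brDDs I (- brVDs I a (flat b)) (Blinfun (P b))) = - (\<Sum>t\<in>UNIV. a $ t *\<^sub>R X2 t)"
  proof -
    have "(\<Sum>b\<in>Basis. brDDs I (- brVDs I a (flat b)) (Blinfun (P b)))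
       = - (\<Sum>b\<in>Basis. \<Sum>t\<in>UNIV. a $ t *\<^sub>R brDDs I (J t b) (Blinfun (P b)))"
      by (simp add: brVDs_def brDDs_l sum_negf)
    also have "\<dots> = - (\<Sum>t\<in>UNIV. \<Sum>b\<in>Basis. a $ t *\<^sub>R brDDs I (J t b) (Blinfun (P b)))"
      by (subst sum.swap) (rule refl)
    also have "\<dots> = - (\<Sum>t\<in>UNIV. a $ t *\<^sub>R X2 t)"
      by (simp add: X2_def scaleR_sum_right)
    finally show ?thesis .
  qed
  have e3: "(\<Sum>b\<in>Basis. brDDs I b (Blinfun (P (- brVDs I a (flat b))))) = (\<Sum>t\<in>UNIV. a $ t *\<^sub>R X2 t)"
  proof -
    have pl: "Blinfun (P (- brVDs I a (flat b))) = - (\<Sum>t\<in>UNIV. a $ t *\<^sub>R Blinfun (P (J t b)))" for b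
    proof -
      have bv: "brVDs I a (flat b) = (\<Sum>t\<in>UNIV. a $ t *\<^sub>R J t b)" by (simp add: brVDs_def)
      have "Blinfun (P (- brVDs I a (flat b))) = - Blinfun (P (\<Sum>t\<in>UNIV. a $ t *\<^sub>R J t b))"
        using linear_neg[OF Pc_lin[OF bl]] bv by metis
      also have "Blinfun (P (\<Sum>t\<in>UNIV. a $ t *\<^sub>R J t b)) = (\<Sum>t\<in>UNIV. Blinfun (P (a $ t *\<^sub>R J t b)))"
        using linear_sum[OF Pc_lin[OF bl], of "\<lambda>t. a $ t *\<^sub>R J t b" UNIV] by (simp only: o_def)
      also have "\<dots> = (\<Sum>t\<in>UNIV. a $ t *\<^sub>R Blinfun (P (J t b)))"
        using linear_scale[OF Pc_lin[OF bl]] by (simp only:)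
      finally show ?thesis .
    qed
    have "(\<Sum>b\<in>Basis. brDDs I b (Blinfun (P (- brVDs I a (flat b)))))
       = - (\<Sum>b\<in>Basis. \<Sum>t\<in>UNIV. a $ t *\<^sub>R brDDs I b (Blinfun (P (J t b))))"
      by (simp add: pl brDDs_r sum_negf)
    also have "\<dots> = - (\<Sum>t\<in>UNIV. \<Sum>b\<in>Basis. a $ t *\<^sub>R brDDs I b (Blinfun (P (J t b))))"
      by (subst sum.swap) (rule refl)
    also have "\<dots> = (\<Sum>t\<in>UNIV. a $ t *\<^sub>R X2 t)"
      by (simp add: X2_def X3[OF bl] scaleR_sum_right[symmetric] sum_negf)
    finally show ?thesis .
  qed
  have hs: "S + (1/2) *\<^sub>R (- S - S) = (0::'z::real_vector)" for S
  proof -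
    have "- S - S = (-2::real) *\<^sub>R S" by (simp add: scaleR_2[symmetric] algebra_simps)
    then show ?thesis by simp
  qed
  show ?thesis by (simp only: sum_subtractf e1 e2 e3 hs)
qed


lemma box_c:
  fixes P :: "'d \<Rightarrow> 'd \<Rightarrow> real"
  assumes bl: "bilinear P" and sy: "\<forall>x y. P x y = P y x"
    and ev: "\<forall>u v. (real DIM('d) + 10) * P u v + 2 * (\<Sum>s\<in>UNIV. P (J s u) (J s v)) + (u \<bullet> v) * (\<Sum>b\<in>Basis. P b b) = c * P u v"
  shows "boxop I (oneform P) = (\<lambda>X. c *\<^sub>R oneform P X)"
proof
  fix X :: "'d tm"
  have ds: "(\<Sum>s\<in>UNIV. - brDVs I (brVDs I (xiv s) (Blinfun (P (snd X)))) (xiv s))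
     + (\<Sum>b\<in>Basis. flat b o\<^sub>L (brDDs I b (Blinfun (P (snd X))) - brDDs I (snd X) (Blinfun (P b))))
     = c *\<^sub>R Blinfun (P (snd X))"
    by (rule blinfun_eqI) (simp only: Ds_tot[OF bl sy] ev blinfun.scaleR_left bil_blin[OF bl] real_scaleR_def)
  show "boxop I (oneform P) X = c *\<^sub>R oneform P X"
    unfolding box_eq[OF bl sy] E_tot[OF bl sy] ds by (simp add: oneform_def)
qed

end

lemma bilinear_inner': "bilinear (\<lambda>x y::'a::euclidean_space. x \<bullet> y)"
  unfolding bilinear_def
  by (simp add: linear_conv_bounded_linear bounded_linear_inner_left bounded_linear_inner_right)

theorem lemma4p2:
  fixes n :: nat
    and I :: "qi \<Rightarrow> ('d::euclidean_space \<Rightarrow>\<^sub>L 'd)"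
  assumes dim: "DIM('d) = 4 * n"
    and sq: "\<forall>s. I s o\<^sub>L I s = - id_blinfun"
    and q12: "I Q1 o\<^sub>L I Q2 = I Q3"
    and q21: "I Q2 o\<^sub>L I Q1 = - I Q3"
    and orth: "\<forall>s u v. blinfun_apply (I s) u \<bullet> blinfun_apply (I s) v = u \<bullet> v"
  shows
    "(\<forall>P. bilinear P \<and> (\<forall>x y. P x y = P y x) \<and> (\<Sum>b\<in>Basis. P b b) = 0
          \<and> (\<forall>x y. (\<Sum>s\<in>UNIV. P (blinfun_apply (I s) x) (blinfun_apply (I s) y)) = - P x y)
        \<longrightarrow> boxop I (oneform P) = (\<lambda>X. (4 * (real n + 2)) *\<^sub>R oneform P X))
   \<and> (\<forall>P. bilinear P \<and> (\<forall>x y. P x y = P y x) \<and> (\<Sum>b\<in>Basis. P b b) = 0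
          \<and> (\<forall>x y. (\<Sum>s\<in>UNIV. P (blinfun_apply (I s) x) (blinfun_apply (I s) y)) = 3 * P x y)
        \<longrightarrow> boxop I (oneform P) = (\<lambda>X. (4 * (real n + 4)) *\<^sub>R oneform P X))
   \<and> boxop I (oneform (\<lambda>x y. x \<bullet> y)) = (\<lambda>X. (8 * (real n + 2)) *\<^sub>R oneform (\<lambda>x y. x \<bullet> y) X)"
proof -
  interpret qs I using sq q12 q21 orth by unfold_locales
  have dimr: "real DIM('d) = 4 * real n" using dim by simp
  have c1: "boxop I (oneform P) = (\<lambda>X. (4 * (real n + 2)) *\<^sub>R oneform P X)"
    if "bilinear P" "\<forall>x y. P x y = P y x" "(\<Sum>b\<in>Basis. P b b) = 0"
       "\<forall>x y. (\<Sum>s\<in>UNIV. P (blinfun_apply (I s) x) (blinfun_apply (I s) y)) = - P x y" for P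
    by (rule box_c) (use that dimr in \<open>auto simp: algebra_simps\<close>)
  have c2: "boxop I (oneform P) = (\<lambda>X. (4 * (real n + 4)) *\<^sub>R oneform P X)"
    if "bilinear P" "\<forall>x y. P x y = P y x" "(\<Sum>b\<in>Basis. P b b) = 0"
       "\<forall>x y. (\<Sum>s\<in>UNIV. P (blinfun_apply (I s) x) (blinfun_apply (I s) y)) = 3 * P x y" for P
    by (rule box_c) (use that dimr in \<open>auto simp: algebra_simps\<close>)
  have c3: "boxop I (oneform (\<lambda>x y. x \<bullet> y)) = (\<lambda>X. (8 * (real n + 2)) *\<^sub>R oneform (\<lambda>x y. x \<bullet> y) X)"
  proof (rule box_c)
    show "bilinear (\<lambda>x y::'d. x \<bullet> y)" by (rule bilinear_inner')
    show "\<forall>x y::'d. x \<bullet> y = y \<bullet> x" by (simp add: inner_commute)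
    have tr: "(\<Sum>b\<in>(Basis::'d set). b \<bullet> b) = real DIM('d)" by simp
    show "\<forall>u v::'d. (real DIM('d) + 10) * (u \<bullet> v) + 2 * (\<Sum>s\<in>UNIV. J s u \<bullet> J s v) + (u \<bullet> v) * (\<Sum>b\<in>(Basis::'d set). b \<bullet> b)
           = 8 * (real n + 2) * (u \<bullet> v)"
      using dimr tr by (simp add: algebra_simps)
  qed
  show ?thesis using c1 c2 c3 by blast
qed

end
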